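(* Let $p\ge 2$ be an integer, let $0<d_1,\dots,d_p<\tfrac12$, and let $(X_t)_{t\in\mathbb{Z}}$ be a PtvARFIMA process with period $p$ and memory parameters $d_1,\dots,d_p$ (as defined in the context). Consider the $\mathbb{R}^p$-valued series $X_m=(X_{1+pm},\dots,X_{p+pm})^{T}$, $m\in\mathbb{Z}$. Then $\{X_m\}_{m\in\mathbb{Z}}$ is a $p$-variate second-order stationary long memory time series: its autocovariance entries satisfy, as $h\to\infty$, $$\gamma_X^{i,k}(h)\simeq \sigma_i^2\, \big(h^{D-\frac12 I}\,R\,h^{D-\frac12 I}\big)_{i,k}=\sigma_i^2\,R^{i,k}\,h^{d_i+d_k-1},\qquad i,k=1,\dots,p,$$ where $D=\mathrm{diag}(d_1,\dots,d_p)$, $R=(R^{i,k})_{i,k=1}^p$ with $R^{i,k}>0$ for all $i,k$, and for $a>0$ and a diagonal matrix $N=\mathrm{diag}(n_1,\dots,n_p)$ one writes $a^N=\mathrm{diag}(a^{n_1},\dots,a^{n_p})$.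
   Context: Let $B$ denote the backshift operator, $B^jX_t=X_{t-j}$. Let $(\varepsilon_t)_{t\in\mathbb{Z}}$ be a sequence of independent random variables with mean zero and finite variances $\sigma_t^2$ that are periodic: $\sigma_{t+p}^2=\sigma_t^2$. Every $t\in\mathbb{Z}$ is written uniquely as $t=i+pm$ with $i\in\{1,\dots,p\}$, $m\in\mathbb{Z}$; write $\sigma_i^2$ for the variance in season $i$. A PtvARFIMA (periodic ARFIMA$(0,d_i,0)$) process with period $p$ and memory parameters $d_1,\dots,d_p$ (extended periodically, $d_{t+p}=d_t$) is a process satisfying $(1-B)^{d_i}X_{i+pm}=\varepsilon_{i+pm}$, i.e. (when $d_i<\tfrac12$) given by the moving-average representation $X_{i+pm}=\sum_{j=0}^{\infty}\psi_j^i\,\varepsilon_{i+pm-j}$ with $\psi_j^i=\frac{\Gamma(j+d_i)}{\Gamma(j+1)\Gamma(d_i)}$; these satisfy $\psi_j^i\sim v_i j^{d_i-1}$ as $j\to\infty$ with $v_i>0$. The notation $\gamma_X^{i,k}(h)$ denotes the $(i,k)$ entry of the lag-$h$ autocovariance matrix of the vector series $X_m$. *)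

theory Defs
  imports "HOL-Probability.Probability" "HOL-Library.Landau_Symbols"
begin

text \<open>MA(infinity) coefficients of the ARFIMA(0,d,0) filter (1-B)^(-d):
  psi_j = Gamma(j+d) / (Gamma(j+1) Gamma(d)).\<close>
definition arfima_psi :: "real \<Rightarrow> nat \<Rightarrow> real" where
  "arfima_psi d j = Gamma (real j + d) / (Gamma (real j + 1) * Gamma d)"

end

theory Submission
  imports Defs
begin



lemma psi_poch: assumes "d > 0" shows "arfima_psi d n = pochhammer d n / fact n"
proof -
  have nz: "d \<notin> \<int>\<^sub>\<le>\<^sub>0" using assms by (auto elim!: nonpos_Ints_cases)
  have "Gamma (real n + 1) = fact n"
    using Gamma_fact[of n] by (simp add: add.commute)
  moreover have "pochhammer d n = Gamma (d + real n) / Gamma d" using pochhammer_Gamma[OF nz] by simp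
  ultimately show ?thesis unfolding arfima_psi_def using Gamma_real_pos[OF assms]
    by (simp add: field_simps add.commute)
qed

lemma psi_0: "d > 0 \<Longrightarrow> arfima_psi d 0 = 1"
  by (simp add: psi_poch)

lemma psi_Suc: "d > 0 \<Longrightarrow> arfima_psi d (Suc j) = arfima_psi d j * (real j + d) / (real j + 1)"
  by (simp add: psi_poch pochhammer_Suc field_simps add.commute)

lemma psi_pos: "d > 0 \<Longrightarrow> arfima_psi d j > 0"
  by (induction j) (simp_all add: psi_0 psi_Suc)

lemma psi_Suc_le: "d > 0 \<Longrightarrow> d \<le> 1 \<Longrightarrow> arfima_psi d (Suc j) \<le> arfima_psi d j"
  using psi_pos[of d j] by (simp add: psi_Suc field_simps mult_left_le)

lemma psi_antimono: assumes "d > 0" "d \<le> 1" "j \<le> k" shows "arfima_psi d k \<le> arfima_psi d j"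
  using assms(3)
proof (induction k)
  case 0 then show ?case by simp
next
  case (Suc k)
  show ?case
  proof (cases "j = Suc k")
    case False
    then have "j \<le> k" using Suc.prems by simp
    then show ?thesis using Suc.IH psi_Suc_le[OF assms(1,2), of k] by linarith
  qed simp
qed

lemma psi_asymp: assumes "d > 0"
  shows "(\<lambda>n. arfima_psi d n / (real n powr (d - 1) / Gamma d)) \<longlonglongrightarrow> 1"
proof -
  have nz: "d \<notin> \<int>\<^sub>\<le>\<^sub>0" using assms by (auto elim!: nonpos_Ints_cases)
  have G: "Gamma_series d \<longlonglongrightarrow> Gamma d" by (rule Gamma_series_LIMSEQ)
  have Gp: "Gamma d > 0" using assms by simp
  have L1: "(\<lambda>n. Gamma d / Gamma_series d n) \<longlonglongrightarrow> Gamma d / Gamma d"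
    by (intro tendsto_intros G) (use Gp in simp)
  have L2: "(\<lambda>n. real n / (real n + d)) \<longlonglongrightarrow> 1"
  proof -
    have "(\<lambda>n. 1 / (1 + d / real n)) \<longlonglongrightarrow> 1 / (1 + 0)"
      by (intro tendsto_intros tendsto_divide_0[OF tendsto_const] filterlim_real_sequentially) simp
    moreover have "eventually (\<lambda>n. 1 / (1 + d / real n) = real n / (real n + d)) sequentially"
      using eventually_gt_at_top[of "0::nat"] by eventually_elim (simp add: field_simps)
    ultimately show ?thesis by (simp add: tendsto_cong)
  qed
  have "(\<lambda>n. Gamma d / Gamma_series d n * (real n / (real n + d))) \<longlonglongrightarrow> 1 * 1"
    using tendsto_mult[OF L1 L2] Gp by simp
  moreover have "eventually (\<lambda>n. Gamma d / Gamma_series d n * (real n / (real n + d)) =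
       arfima_psi d n / (real n powr (d - 1) / Gamma d)) sequentially"
    using eventually_gt_at_top[of "0::nat"]
  proof eventually_elim
    case (elim n)
    have pn: "pochhammer d (Suc n) = pochhammer d n * (d + real n)" by (simp add: pochhammer_rec')
    have pp: "pochhammer d n > 0" using assms by (rule pochhammer_pos)
    have e: "exp (d * ln (real n)) = real n powr d" using elim by (simp add: powr_def)
    have pw: "real n powr (d - 1) = real n powr d / real n" using elim by (simp add: powr_diff)
    have q1: "real n powr d > 0" using elim by simp
    have q2: "(fact n :: real) > 0" by simp
    have q3: "d + real n > 0" using assms by simp
    show ?case using elim pp Gp assms q1 q2 q3
      unfolding Gamma_series_def psi_poch[OF assms] pw
      by (simp add: e pn divide_simps)
  qed
  ultimately show ?thesis by (simp add: tendsto_cong)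
qed


lemma psi_bound_ev: assumes "d > 0"
  shows "eventually (\<lambda>n. arfima_psi d n \<le> 2 * (real n powr (d - 1) / Gamma d)) sequentially"
proof -
  have "eventually (\<lambda>n. arfima_psi d n / (real n powr (d - 1) / Gamma d) < 2) sequentially"
    using order_tendstoD(2)[OF psi_asymp[OF assms], of 2] by simp
  then show ?thesis using eventually_gt_at_top[of "0::nat"]
  proof eventually_elim
    case (elim n)
    have g: "Gamma d > 0" using assms by simp
    have xp: "real n powr (d - 1) / Gamma d > 0" using elim assms by simp
    have "arfima_psi d n < 2 * (real n powr (d - 1) / Gamma d)"
      using elim(1) unfolding pos_divide_less_eq[OF xp] by (simp only: mult.commute)
    then show ?case by simp
  qed
qed

lemma psi_prod_bound_ev: assumes "a > 0" "b > 0"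
  shows "eventually (\<lambda>u. arfima_psi a u * arfima_psi b u \<le>
     4 / (Gamma a * Gamma b) * real u powr (a + b - 2)) sequentially"
  using psi_bound_ev[OF assms(1)] psi_bound_ev[OF assms(2)] eventually_gt_at_top[of "0::nat"]
proof eventually_elim
  case (elim u)
  have "arfima_psi a u * arfima_psi b u \<le> (2 * (real u powr (a - 1) / Gamma a)) * (2 * (real u powr (b - 1) / Gamma b))"
    using elim psi_pos[OF assms(1), of u] psi_pos[OF assms(2), of u]
    by (intro mult_mono) auto
  also have "\<dots> = 4 / (Gamma a * Gamma b) * real u powr (a + b - 2)"
    using elim by (simp add: powr_add[symmetric] field_simps)
  finally show ?case .
qed

lemma psi_to_0: assumes "d > 0" "d < 1" shows "arfima_psi d \<longlonglongrightarrow> 0"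
proof (rule Lim_null_comparison[OF _ ])
  show "eventually (\<lambda>n. norm (arfima_psi d n) \<le> 2 * (real n powr (d - 1) / Gamma d)) sequentially"
    using psi_bound_ev[OF assms(1)] by (rule eventually_mono) (use psi_pos[OF assms(1)] in \<open>simp add: abs_of_pos\<close>)
  have "(\<lambda>n. real n powr (d - 1)) \<longlonglongrightarrow> 0"
    using assms by (intro tendsto_neg_powr filterlim_real_sequentially) auto
  then have "(\<lambda>n. (2 / Gamma d) * real n powr (d - 1)) \<longlonglongrightarrow> 0"
    by (rule tendsto_mult_right_zero)
  then show "(\<lambda>n. 2 * (real n powr (d - 1) / Gamma d)) \<longlonglongrightarrow> 0"
    by (simp add: field_simps)
qed

lemma summable_psi_prod: assumes "a > 0" "b > 0" "a \<le> 1" "a + b < 1"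
  shows "summable (\<lambda>u. arfima_psi a (u + N) * arfima_psi b u)"
proof (rule summable_comparison_test_ev)
  show "eventually (\<lambda>u. norm (arfima_psi a (u + N) * arfima_psi b u) \<le>
     4 / (Gamma a * Gamma b) * real u powr (a + b - 2)) sequentially"
    using psi_prod_bound_ev[OF assms(1,2)]
  proof eventually_elim
    case (elim u)
    have "norm (arfima_psi a (u + N) * arfima_psi b u) = arfima_psi a (u + N) * arfima_psi b u"
      using psi_pos[OF assms(1), of "u+N"] psi_pos[OF assms(2), of u] by (simp add: abs_of_pos)
    also have "\<dots> \<le> arfima_psi a u * arfima_psi b u"
      using psi_antimono[OF assms(1,3), of u "u+N"] psi_pos[OF assms(2), of u] by (intro mult_right_mono) auto
    also note elim
    finally show ?case .
  qed
  show "summable (\<lambda>u. 4 / (Gamma a * Gamma b) * real u powr (a + b - 2))"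
    using assms by (intro summable_mult) (simp add: summable_real_powr_iff)
qed

lemma psi_tail_to_0: assumes "a > 0" "b > 0" "a \<le> 1" "a + b < 1"
  shows "(\<lambda>U. real U * arfima_psi b U * arfima_psi a (U + N)) \<longlonglongrightarrow> 0"
proof (rule Lim_null_comparison)
  show "eventually (\<lambda>U. norm (real U * arfima_psi b U * arfima_psi a (U + N)) \<le>
     4 / (Gamma a * Gamma b) * real U powr (a + b - 1)) sequentially"
    using psi_prod_bound_ev[OF assms(1,2)] eventually_gt_at_top[of "0::nat"]
  proof eventually_elim
    case (elim U)
    have "arfima_psi a (U + N) * arfima_psi b U \<le> arfima_psi a U * arfima_psi b U"
      using psi_antimono[OF assms(1,3), of U "U+N"] psi_pos[OF assms(2), of U] by (intro mult_right_mono) auto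
    also have "\<dots> \<le> 4 / (Gamma a * Gamma b) * real U powr (a + b - 2)" by (rule elim)
    finally have "real U * (arfima_psi a (U + N) * arfima_psi b U) \<le> real U * (4 / (Gamma a * Gamma b) * real U powr (a + b - 2))"
      by (intro mult_left_mono) auto
    also have "\<dots> = 4 / (Gamma a * Gamma b) * real U powr (a + b - 1)"
    proof -
      have "real U * real U powr (a + b - 2) = real U powr (a + b - 1)"
        using elim by (simp add: powr_add[symmetric] powr_mult_base)
      then show ?thesis by (simp add: field_simps)
    qed
    finally show ?case using psi_pos[OF assms(1), of "U+N"] psi_pos[OF assms(2), of U]
      by (simp add: abs_mult mult_ac)
  qed
  have "(\<lambda>n. real n powr (a + b - 1)) \<longlonglongrightarrow> 0"
    using assms by (intro tendsto_neg_powr filterlim_real_sequentially) auto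
  then show "(\<lambda>n. 4 / (Gamma a * Gamma b) * real n powr (a + b - 1)) \<longlonglongrightarrow> 0"
    by (rule tendsto_mult_right_zero)
qed

definition Spsi :: "real \<Rightarrow> real \<Rightarrow> nat \<Rightarrow> real" where
  "Spsi a b N = (\<Sum>u. arfima_psi a (u + N) * arfima_psi b u)"

lemma Spsi_rec: assumes "a > 0" "b > 0" "a \<le> 1" "a + b < 1"
  shows "(real N + 1 - b) * Spsi a b (Suc N) = (real N + a) * Spsi a b N"
proof -
  define g where "g v = real v * arfima_psi b v * arfima_psi a (v + N)" for v
  have trm: "(real N + 1 - b) * (arfima_psi a (u + Suc N) * arfima_psi b u)
      = (real N + a) * (arfima_psi a (u + N) * arfima_psi b u) + (g u - g (Suc u))" for u
  proof -
    define A where "A = arfima_psi a (u + N)"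
    define A' where "A' = arfima_psi a (u + Suc N)"
    define B where "B = arfima_psi b u"
    define B' where "B' = arfima_psi b (Suc u)"
    have e1: "A' * (real u + real N + 1) = A * (real u + real N + a)"
      unfolding A_def A'_def using psi_Suc[OF assms(1), of "u + N"] by (simp add: field_simps)
    have e2: "B' * (real u + 1) = B * (real u + b)"
      unfolding B_def B'_def using psi_Suc[OF assms(2), of u] by (simp add: field_simps)
    have gu: "g u = real u * B * A" unfolding g_def A_def B_def by simp
    have "g (Suc u) = (B' * (real u + 1)) * A'" unfolding g_def A'_def B'_def by (simp add: algebra_simps)
    also have "\<dots> = (real u + b) * B * A'" using e2 by simp
    finally have gS: "g (Suc u) = (real u + b) * B * A'" .
    have "(real N + 1 - b) * (A' * B) = (real N + a) * (A * B) + (real u * B * A - (real u + b) * B * A')"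
      using e1 by algebra
    then show ?thesis unfolding gu gS A_def A'_def B_def by simp
  qed
  have fin: "(real N + 1 - b) * (\<Sum>u<U. arfima_psi a (u + Suc N) * arfima_psi b u)
      = (real N + a) * (\<Sum>u<U. arfima_psi a (u + N) * arfima_psi b u) - g U" for U
  proof -
    have "(real N + 1 - b) * (\<Sum>u<U. arfima_psi a (u + Suc N) * arfima_psi b u)
       = (\<Sum>u<U. (real N + a) * (arfima_psi a (u + N) * arfima_psi b u) + (g u - g (Suc u)))"
      unfolding sum_distrib_left by (rule sum.cong[OF refl trm])
    also have "\<dots> = (real N + a) * (\<Sum>u<U. arfima_psi a (u + N) * arfima_psi b u) + (g 0 - g U)"
      by (simp add: sum.distrib sum_distrib_left sum_lessThan_telescope')
    finally show ?thesis by (simp add: g_def)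
  qed
  have L1: "(\<lambda>U. (real N + 1 - b) * (\<Sum>u<U. arfima_psi a (u + Suc N) * arfima_psi b u))
      \<longlonglongrightarrow> (real N + 1 - b) * Spsi a b (Suc N)"
    unfolding Spsi_def by (intro tendsto_intros summable_LIMSEQ summable_psi_prod assms)
  have L2: "(\<lambda>U. (real N + a) * (\<Sum>u<U. arfima_psi a (u + N) * arfima_psi b u) - g U)
      \<longlonglongrightarrow> (real N + a) * Spsi a b N - 0"
    unfolding Spsi_def g_def
    by (intro tendsto_intros summable_LIMSEQ summable_psi_prod psi_tail_to_0 assms)
  show ?thesis using LIMSEQ_unique[OF L1] L2 fin by simp
qed

lemma Spsi_closed: assumes "a > 0" "b > 0" "a \<le> 1" "a + b < 1"
  shows "Spsi a b N = Spsi a b 0 * arfima_psi a N / arfima_psi (1 - b) N"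
proof (induction N)
  case 0 then show ?case using assms by (simp add: psi_0)
next
  case (Suc N)
  have b1: "1 - b > 0" using assms by simp
  have pos: "real N + 1 - b > 0" using assms by simp
  have "Spsi a b (Suc N) = (real N + a) * Spsi a b N / (real N + 1 - b)"
    using Spsi_rec[OF assms, of N] pos by (simp add: field_simps)
  also have "\<dots> = Spsi a b 0 * (arfima_psi a N * (real N + a)) / (arfima_psi (1 - b) N * (real N + (1 - b)))"
    unfolding Suc using psi_pos[OF b1, of N] pos by (simp add: field_simps)
  also have "\<dots> = Spsi a b 0 * (arfima_psi a N * (real N + a) / (real N + 1)) / (arfima_psi (1 - b) N * (real N + (1 - b)) / (real N + 1))"
    by simp
  also have "\<dots> = Spsi a b 0 * arfima_psi a (Suc N) / arfima_psi (1 - b) (Suc N)"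
    unfolding psi_Suc[OF assms(1)] psi_Suc[OF b1] by simp
  finally show ?case .
qed

lemma Spsi_pos: assumes "a > 0" "b > 0" "a \<le> 1" "a + b < 1"
  shows "Spsi a b 0 > 0"
proof -
  have "0 < (\<Sum>u<1. arfima_psi a (u + 0) * arfima_psi b u)" using assms by (simp add: psi_0)
  also have "\<dots> \<le> Spsi a b 0" unfolding Spsi_def
    using summable_psi_prod[OF assms, of 0] psi_pos assms
    by (intro sum_le_suminf) (auto intro!: mult_nonneg_nonneg less_imp_le)
  finally show ?thesis .
qed



lemma periodic_nat_mod: assumes "\<And>u. w (u + p) = w (u::nat)" shows "w u = w (u mod p)"
proof -
  have "w (r + p * q) = w r" for r q
  proof (induction q)
    case (Suc q)
    have "w (r + p * Suc q) = w ((r + p * q) + p)" by (simp add: algebra_simps)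
    also have "\<dots> = w r" using assms Suc by simp
    finally show ?case .
  qed simp
  from this[of "u mod p" "u div p"] show ?thesis by simp
qed

lemma periodic_block_sum: assumes "\<And>u. w (u + p) = w (u::nat)"
  shows "(\<Sum>u\<in>{q*p..<q*p+p}. w u) = (\<Sum>r<p. w r)"
proof -
  have "(\<Sum>u\<in>{q*p..<q*p+p}. w u) = (\<Sum>r<p. w (r + q*p))"
    by (rule sum.reindex_bij_witness[of _ "\<lambda>r. r + q*p" "\<lambda>u. u - q*p"]) auto
  also have "\<dots> = (\<Sum>r<p. w r)"
  proof (rule sum.cong[OF refl])
    fix r
    have "w r = w ((r + q * p) mod p)" using periodic_nat_mod[of w p, OF assms, of r] by simp
    also have "\<dots> = w (r + q * p)" using periodic_nat_mod[of w p, OF assms, of "r + q * p"] by simp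
    finally show "w (r + q * p) = w r" by simp
  qed
  finally show ?thesis .
qed

lemma weighted_cmp:
  fixes P w :: "nat \<Rightarrow> real" and p :: nat
  assumes p: "p > 0" and Pdec: "\<And>u. P (Suc u) \<le> P u" and Pnn: "\<And>u. P u \<ge> 0" and Psum: "summable P"
    and wper: "\<And>u. w (u + p) = w u" and wnn: "\<And>u. w u \<ge> 0"
  shows "summable (\<lambda>u. w u * P u)"
    and "\<bar>(\<Sum>u. w u * P u) - (\<Sum>r<p. w r) / real p * (\<Sum>u. P u)\<bar> \<le> (\<Sum>r<p. w r) * P 0"
proof -
  define W where "W = (\<Sum>r<p. w r)"
  have wle: "w u \<le> W" for u
  proof -
    have "w u = w (u mod p)" by (rule periodic_nat_mod[of w p, OF wper])
    also have "\<dots> \<le> W" unfolding W_def using p wnn by (intro member_le_sum) auto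
    finally show ?thesis .
  qed
  show ws: "summable (\<lambda>u. w u * P u)"
    by (rule summable_comparison_test[OF _ summable_mult[OF Psum, of W]])
       (use wle wnn Pnn in \<open>auto intro!: exI[of _ 0] mult_right_mono simp: abs_mult\<close>)
  have dec: "decseq P" by (rule decseq_SucI) (rule Pdec)
  define A where "A q = (\<Sum>u\<in>{q*p..<q*p+p}. w u * P u)" for q
  define B where "B q = (\<Sum>u\<in>{q*p..<q*p+p}. P u)" for q
  define U where "U q = P (q*p)" for q
  have As: "A sums (\<Sum>u. w u * P u)" unfolding A_def by (rule sums_group[OF summable_sums[OF ws] p])
  have Bs: "B sums (\<Sum>u. P u)" unfolding B_def by (rule sums_group[OF summable_sums[OF Psum] p])
  have bnd: "\<bar>A q - W / real p * B q\<bar> \<le> W * (U q - U (Suc q))" for q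
  proof -
    have lo: "P (q*p+p) \<le> P u" "P u \<le> P (q*p)" if "u \<in> {q*p..<q*p+p}" for u
      using that by (auto intro!: decseqD[OF dec])
    have "A q \<le> (\<Sum>u\<in>{q*p..<q*p+p}. w u * P (q*p))" unfolding A_def
      using lo wnn by (intro sum_mono mult_left_mono) auto
    also have "\<dots> = W * U q" unfolding U_def W_def
      by (simp add: sum_distrib_right[symmetric] periodic_block_sum[of w p, OF wper])
    finally have A1: "A q \<le> W * U q" .
    have "W * U (Suc q) = (\<Sum>u\<in>{q*p..<q*p+p}. w u) * P (q*p+p)" unfolding U_def W_def
      using periodic_block_sum[of w p q, OF wper] by (simp add: add.commute)
    also have "\<dots> = (\<Sum>u\<in>{q*p..<q*p+p}. w u * P (q*p+p))" by (simp add: sum_distrib_right)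
    also have "\<dots> \<le> A q" unfolding A_def
      using lo wnn by (intro sum_mono mult_left_mono) auto
    finally have A2: "W * U (Suc q) \<le> A q" .
    have "B q \<le> (\<Sum>u\<in>{q*p..<q*p+p}. P (q*p))" unfolding B_def
      using lo by (intro sum_mono) auto
    also have "\<dots> = real p * U q" unfolding U_def by simp
    finally have B1: "B q \<le> real p * U q" .
    have "real p * U (Suc q) = (\<Sum>u\<in>{q*p..<q*p+p}. P (q*p+p))" unfolding U_def
      by (simp add: add.commute)
    also have "\<dots> \<le> B q" unfolding B_def
      using lo by (intro sum_mono) auto
    finally have B2: "real p * U (Suc q) \<le> B q" .
    have W0: "W \<ge> 0" unfolding W_def using wnn by (simp add: sum_nonneg)
    have pp: "real p > 0" using p by simp
    have "W / real p * B q \<le> W * U q" using mult_left_mono[OF B1 W0] pp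
      by (simp add: field_simps)
    moreover have "W * U (Suc q) \<le> W / real p * B q" using mult_left_mono[OF B2 W0] pp
      by (simp add: field_simps)
    ultimately show ?thesis using A1 A2 by (simp add: right_diff_distrib abs_le_iff)
  qed
  have U0: "U \<longlonglongrightarrow> 0"
  proof -
    have sm: "strict_mono (\<lambda>q::nat. q*p)" using p by (auto simp: strict_mono_def)
    have "(\<lambda>q. P (q*p)) \<longlonglongrightarrow> 0"
      using LIMSEQ_subseq_LIMSEQ[OF summable_LIMSEQ_zero[OF Psum] sm] by (simp add: o_def)
    then show ?thesis unfolding U_def .
  qed
  have Ts: "(\<lambda>q. W * (U q - U (Suc q))) sums (W * (U 0 - 0))"
    by (intro sums_mult telescope_sums' U0)
  have d: "(\<lambda>q. A q - W / real p * B q) sums ((\<Sum>u. w u * P u) - W / real p * (\<Sum>u. P u))"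
    by (intro sums_diff As sums_mult Bs)
  have "summable (\<lambda>q. \<bar>A q - W / real p * B q\<bar>)"
    by (rule summable_comparison_test[OF _ sums_summable[OF Ts]]) (use bnd in auto)
  then have "\<bar>\<Sum>q. A q - W / real p * B q\<bar> \<le> (\<Sum>q. \<bar>A q - W / real p * B q\<bar>)"
    by (rule summable_rabs)
  also have "\<dots> \<le> (\<Sum>q. W * (U q - U (Suc q)))"
    by (rule suminf_le[OF bnd]) (fact, rule sums_summable[OF Ts])
  also have "\<dots> = W * P 0" using sums_unique[OF Ts] by (simp add: U_def)
  finally show "\<bar>(\<Sum>u. w u * P u) - (\<Sum>r<p. w r) / real p * (\<Sum>u. P u)\<bar> \<le> (\<Sum>r<p. w r) * P 0"
    using sums_unique[OF d] unfolding W_def by simp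
qed



lemma psi_ratio_asymp: assumes "a > 0" "b > 0" "b < 1"
  shows "(\<lambda>N. (arfima_psi a N / arfima_psi (1-b) N) / real N powr (a+b-1)) \<longlonglongrightarrow> Gamma (1-b) / Gamma a"
proof -
  have b1: "1 - b > 0" using assms by simp
  have X: "(\<lambda>n. arfima_psi a n / (real n powr (a - 1) / Gamma a)) \<longlonglongrightarrow> 1" by (rule psi_asymp[OF assms(1)])
  have Y: "(\<lambda>n. arfima_psi (1-b) n / (real n powr ((1-b) - 1) / Gamma (1-b))) \<longlonglongrightarrow> 1" by (rule psi_asymp[OF b1])
  have "(\<lambda>n. (arfima_psi a n / (real n powr (a - 1) / Gamma a)) / (arfima_psi (1-b) n / (real n powr ((1-b) - 1) / Gamma (1-b))) * (Gamma (1-b) / Gamma a))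
      \<longlonglongrightarrow> 1 / 1 * (Gamma (1-b) / Gamma a)"
    by (intro tendsto_intros X Y) simp
  moreover have "eventually (\<lambda>n. (arfima_psi a n / (real n powr (a - 1) / Gamma a)) / (arfima_psi (1-b) n / (real n powr ((1-b) - 1) / Gamma (1-b))) * (Gamma (1-b) / Gamma a)
     = (arfima_psi a n / arfima_psi (1-b) n) / real n powr (a+b-1)) sequentially"
    using eventually_gt_at_top[of "0::nat"]
  proof eventually_elim
    case (elim n)
    have e: "real n powr (a+b-1) = real n powr (a - 1) / real n powr ((1-b) - 1)"
      using elim by (simp add: powr_diff[symmetric] algebra_simps)
    have g1: "Gamma (1-b) \<noteq> 0" "Gamma a \<noteq> 0" using Gamma_real_pos[OF b1] Gamma_real_pos[OF assms(1)] by auto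
    show ?case unfolding e using elim assms psi_pos[OF b1, of n] g1
      by (simp add: field_simps)
  qed
  ultimately show ?thesis by (simp add: tendsto_cong)
qed

lemma psi_prod_dec: assumes "a > 0" "b > 0" "a \<le> 1" "b \<le> 1"
  shows "arfima_psi a (Suc u + N) * arfima_psi b (Suc u) \<le> arfima_psi a (u + N) * arfima_psi b u"
  using psi_Suc_le[OF assms(1,3), of "u+N"] psi_Suc_le[OF assms(2,4), of u] psi_pos[OF assms(1)] psi_pos[OF assms(2)]
  by (intro mult_mono) (auto intro: less_imp_le)

definition Gw :: "real \<Rightarrow> real \<Rightarrow> (nat \<Rightarrow> real) \<Rightarrow> nat \<Rightarrow> real" where
  "Gw a b w N = (\<Sum>u. w u * (arfima_psi a (u + N) * arfima_psi b u))"

lemma Gw_asymp: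
  assumes ab: "a > 0" "b > 0" "a \<le> 1" "a + b < 1" and p: "p > 0"
    and wper: "\<And>u. w (u + p) = w u" and wnn: "\<And>u. w u \<ge> 0"
  shows "(\<lambda>N. Gw a b w N / real N powr (a+b-1)) \<longlonglongrightarrow>
     (\<Sum>r<p. w r) / real p * Spsi a b 0 * (Gamma (1-b) / Gamma a)"
proof -
  define W where "W = (\<Sum>r<p. w r)"
  have b1: "1 - b > 0" "b < 1" using ab by auto
  define K where "K = W / real p * Spsi a b 0"
  have bl1: "b \<le> 1" using ab by simp
  have close: "\<bar>Gw a b w N * arfima_psi (1-b) N / arfima_psi a N - K\<bar> \<le> W * arfima_psi (1-b) N" for N
  proof -
    have c: "\<bar>Gw a b w N - W / real p * Spsi a b N\<bar> \<le> W * (arfima_psi a (0 + N) * arfima_psi b 0)"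
      unfolding Gw_def Spsi_def W_def
      by (rule weighted_cmp(2)[where w=w and p=p, OF p _ _ summable_psi_prod[OF ab] wper wnn])
         (use psi_prod_dec[OF ab(1,2,3) bl1] psi_pos ab in \<open>auto intro!: mult_nonneg_nonneg less_imp_le\<close>)
    have pa: "arfima_psi a N > 0" using psi_pos ab by auto
    have pb: "arfima_psi (1-b) N > 0" using psi_pos b1 by auto
    have "Gw a b w N * arfima_psi (1-b) N / arfima_psi a N - K
        = (Gw a b w N - W / real p * Spsi a b N) * (arfima_psi (1-b) N / arfima_psi a N)"
      unfolding K_def Spsi_closed[OF ab, of N] using pa pb by (simp add: field_simps)
    also have "\<bar>\<dots>\<bar> = \<bar>Gw a b w N - W / real p * Spsi a b N\<bar> * (arfima_psi (1-b) N / arfima_psi a N)"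
      using pa pb by (simp add: abs_mult)
    also have "\<dots> \<le> W * arfima_psi a N * (arfima_psi (1-b) N / arfima_psi a N)"
      by (rule mult_right_mono) (use c pa pb ab in \<open>simp_all add: psi_0\<close>)
    also have "\<dots> = W * arfima_psi (1-b) N" using pa by simp
    finally show ?thesis .
  qed
  have L1: "(\<lambda>N. Gw a b w N * arfima_psi (1-b) N / arfima_psi a N) \<longlonglongrightarrow> K"
  proof -
    have "(\<lambda>N. Gw a b w N * arfima_psi (1-b) N / arfima_psi a N - K) \<longlonglongrightarrow> 0"
    proof (rule Lim_null_comparison)
      show "eventually (\<lambda>N. norm (Gw a b w N * arfima_psi (1-b) N / arfima_psi a N - K) \<le> W * arfima_psi (1-b) N) sequentially"
        using close by simp
      show "(\<lambda>N. W * arfima_psi (1-b) N) \<longlonglongrightarrow> 0"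
        by (intro tendsto_mult_right_zero psi_to_0) (use ab in auto)
    qed
    then show ?thesis by (simp add: LIM_zero_iff)
  qed
  have "(\<lambda>N. (Gw a b w N * arfima_psi (1-b) N / arfima_psi a N) * ((arfima_psi a N / arfima_psi (1-b) N) / real N powr (a+b-1)))
        \<longlonglongrightarrow> K * (Gamma (1-b) / Gamma a)"
    by (intro tendsto_mult L1 psi_ratio_asymp ab b1)
  moreover have "(Gw a b w N * arfima_psi (1-b) N / arfima_psi a N) * ((arfima_psi a N / arfima_psi (1-b) N) / real N powr (a+b-1))
      = Gw a b w N / real N powr (a+b-1)" for N
    using psi_pos[OF ab(1), of N] psi_pos[OF b1(1), of N] by (simp add: field_simps)
  ultimately show ?thesis unfolding K_def W_def by simp
qed



lemma Gw_asymp_shift: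
  assumes ab: "a > 0" "b > 0" "a \<le> 1" "a + b < 1" and p: "p > 0"
    and wper: "\<And>u. w (u + p) = w u" and wnn: "\<And>u. w u \<ge> 0" and Wpos: "(\<Sum>r<p. w r) > 0"
  shows "\<exists>C>0. (\<lambda>h::nat. Gw a b w (nat (int p * int h + c))) \<sim>[at_top] (\<lambda>h. C * real h powr (a+b-1))"
proof -
  define e where "e = a + b - 1"
  define K where "K = (\<Sum>r<p. w r) / real p * Spsi a b 0 * (Gamma (1-b) / Gamma a)"
  have b1: "1 - b > 0" using ab by simp
  have Kpos: "K > 0" unfolding K_def using Wpos p Spsi_pos[OF ab] Gamma_real_pos[OF b1] Gamma_real_pos[OF ab(1)]
    by (intro mult_pos_pos divide_pos_pos) auto
  have G1: "Gw a b w \<sim>[at_top] (\<lambda>N. K * real N powr e)"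
  proof (rule asymp_equivI')
    have GA: "(\<lambda>N. Gw a b w N / real N powr e) \<longlonglongrightarrow> K"
      unfolding e_def K_def by (rule Gw_asymp[where w=w and p=p, OF ab p wper wnn])
    have "(\<lambda>N. (Gw a b w N / real N powr e) / K) \<longlonglongrightarrow> K / K"
      by (rule tendsto_divide[OF GA tendsto_const]) (use Kpos in simp)
    then show "(\<lambda>N. Gw a b w N / (K * real N powr e)) \<longlonglongrightarrow> 1"
      using Kpos by (simp add: field_simps)
  qed
  define Nf where "Nf h = nat (int p * int h + c)" for h :: nat
  have lim: "filterlim Nf at_top at_top"
    unfolding filterlim_at_top
  proof
    fix Z :: nat
    show "eventually (\<lambda>h. Z \<le> Nf h) at_top"
      using eventually_ge_at_top[of "Z + nat \<bar>c\<bar>"]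
    proof eventually_elim
      case (elim h)
      have "h \<le> p * h" using p by simp
      then have "int p * int h \<ge> int h" by (metis of_nat_le_iff of_nat_mult)
      then show ?case unfolding Nf_def using elim by linarith
    qed
  qed
  have G2: "(\<lambda>h. Gw a b w (Nf h)) \<sim>[at_top] (\<lambda>h. K * real (Nf h) powr e)"
    by (rule asymp_equiv_compose'[OF G1 lim])
  have R: "(\<lambda>h. real (Nf h)) \<sim>[at_top] (\<lambda>h. real p * real h)"
  proof (rule asymp_equivI')
    have "(\<lambda>h. 1 + real_of_int c / (real p * real h)) \<longlonglongrightarrow> 1 + 0"
    proof -
      have F: "filterlim (\<lambda>h. real p * real h) at_infinity sequentially"
        by (rule filterlim_at_top_imp_at_infinity, rule filterlim_tendsto_pos_mult_at_top[OF tendsto_const _ filterlim_real_sequentially]) (use p in simp)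
      show ?thesis by (intro tendsto_intros tendsto_divide_0[OF tendsto_const F])
    qed
    moreover have "eventually (\<lambda>h. 1 + real_of_int c / (real p * real h) = real (Nf h) / (real p * real h)) at_top"
      using eventually_ge_at_top[of "nat \<bar>c\<bar> + 1"]
    proof eventually_elim
      case (elim h)
      have "h \<le> p * h" using p by simp
      then have "int p * int h \<ge> int h" by (metis of_nat_le_iff of_nat_mult)
      then have "int p * int h + c \<ge> 0" using elim by linarith
      then have "real (Nf h) = real p * real h + real_of_int c" unfolding Nf_def by simp
      then show ?case using elim p by (simp add: field_simps)
    qed
    ultimately show "(\<lambda>h. real (Nf h) / (real p * real h)) \<longlonglongrightarrow> 1" by (simp add: tendsto_cong)
  qed
  have R2: "(\<lambda>h. real (Nf h) powr e) \<sim>[at_top] (\<lambda>h. (real p * real h) powr e)"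
    by (rule asymp_equiv_powr_real[OF R]) auto
  have R3: "(\<lambda>h. K * real (Nf h) powr e) \<sim>[at_top] (\<lambda>h. K * (real p * real h) powr e)"
    by (rule asymp_equiv_mult[OF asymp_equiv_refl R2])
  have "(\<lambda>h. Gw a b w (Nf h)) \<sim>[at_top] (\<lambda>h. K * (real p * real h) powr e)"
    using G2 R3 by (rule asymp_equiv_trans)
  also have "(\<lambda>h. K * (real p * real h) powr e) = (\<lambda>h. (K * real p powr e) * real h powr e)"
    by (simp add: powr_mult mult.assoc)
  finally show ?thesis unfolding Nf_def e_def using Kpos p by (intro exI[of _ "K * real p powr (a + b - 1)"]) (auto intro!: mult_pos_pos)
qed




lemma per_shift_nat: assumes "\<And>t. f (t + p) = f (t::int)" shows "f (t + p * int n) = f t"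
proof (induction n)
  case (Suc n)
  have "f (t + p * int (Suc n)) = f ((t + p * int n) + p)" by (simp add: algebra_simps)
  also have "\<dots> = f t" using assms Suc by simp
  finally show ?case .
qed simp

lemma per_shift: assumes "\<And>t. f (t + p) = f (t::int)" shows "f (t + p * m) = f t"
proof (cases "m \<ge> 0")
  case True
  then show ?thesis using per_shift_nat[where f=f and p=p and t=t and n="nat m", OF assms] by simp
next
  case False
  have "f t = f ((t + p * m) + p * int (nat (- m)))" using False by simp
  also have "\<dots> = f (t + p * m)" by (rule per_shift_nat[where f=f and p=p, OF assms])
  finally show ?thesis by simp
qed

lemma per_rep: assumes "\<And>t. f (t + p) = f (t::int)" "p > 0" shows "\<exists>i\<in>{1..p}. f t = f i"
proof -
  define i where "i = (t - 1) mod p + 1"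
  have "t = i + p * ((t - 1) div p)" unfolding i_def by (simp add: algebra_simps)
  then have "f t = f i" using per_shift[where f=f and p=p and t=i, OF assms(1)] by metis
  moreover have "i \<in> {1..p}" unfolding i_def using pos_mod_bound[OF assms(2), of "t-1"] pos_mod_sign[OF assms(2), of "t-1"] by simp
  ultimately show ?thesis by blast
qed


locale ptv = prob_space M for M :: "'a measure" +
  fixes p :: int and d \<sigma>2 :: "int \<Rightarrow> real" and \<epsilon> X :: "int \<Rightarrow> 'a \<Rightarrow> real"
  assumes p2: "p \<ge> 2"
    and d_per: "\<And>t. d (t + p) = d t"
    and d_range: "\<And>i. i \<in> {1..p} \<Longrightarrow> 0 < d i \<and> d i < 1/2"
    and \<sigma>_per: "\<And>t. \<sigma>2 (t + p) = \<sigma>2 t"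
    and \<sigma>_pos: "\<And>i. i \<in> {1..p} \<Longrightarrow> \<sigma>2 i > 0"
    and \<epsilon>_rv[measurable]: "\<And>t. \<epsilon> t \<in> borel_measurable M"
    and \<epsilon>_indep: "indep_vars (\<lambda>_. borel) \<epsilon> UNIV"
    and \<epsilon>_L2: "\<And>t. integrable M (\<lambda>\<omega>. (\<epsilon> t \<omega>)\<^sup>2)"
    and \<epsilon>_mean: "\<And>t. expectation (\<epsilon> t) = 0"
    and \<epsilon>_var: "\<And>t. expectation (\<lambda>\<omega>. (\<epsilon> t \<omega>)\<^sup>2) = \<sigma>2 t"
    and X_rv[measurable]: "\<And>t. X t \<in> borel_measurable M"
    and X_MA: "\<And>t. AE \<omega> in M. (\<lambda>n. \<Sum>j<n. arfima_psi (d t) j * \<epsilon> (t - int j) \<omega>) \<longlonglongrightarrow> X t \<omega>"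
begin

lemma p_pos: "p > 0" using p2 by simp

lemma d_pos: "0 < d t" and d_half: "d t < 1/2"
  using per_rep[of d p t, OF d_per p_pos] d_range by force+

lemma \<sigma>_pos_all: "\<sigma>2 t > 0"
  using per_rep[of \<sigma>2 p t, OF \<sigma>_per p_pos] \<sigma>_pos by force

definition Smax where "Smax = (\<Sum>i\<in>{1..p}. \<sigma>2 i)"

lemma \<sigma>_le: "\<sigma>2 t \<le> Smax"
proof -
  obtain i where i: "i \<in> {1..p}" "\<sigma>2 t = \<sigma>2 i" using per_rep[of \<sigma>2 p t, OF \<sigma>_per p_pos] by blast
  have "\<sigma>2 i \<le> Smax" unfolding Smax_def using i(1) \<sigma>_pos_all by (intro member_le_sum) (auto intro: less_imp_le)
  then show ?thesis using i by simp
qed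

lemma eps_int: "integrable M (\<epsilon> t)"
  by (rule square_integrable_imp_integrable[OF \<epsilon>_rv \<epsilon>_L2])

lemma eps_prod: "integrable M (\<lambda>\<omega>. \<epsilon> a \<omega> * \<epsilon> b \<omega>)"
  "expectation (\<lambda>\<omega>. \<epsilon> a \<omega> * \<epsilon> b \<omega>) = (if a = b then \<sigma>2 a else 0)"
proof -
  have "integrable M (\<lambda>\<omega>. \<epsilon> a \<omega> * \<epsilon> b \<omega>) \<and> expectation (\<lambda>\<omega>. \<epsilon> a \<omega> * \<epsilon> b \<omega>) = (if a = b then \<sigma>2 a else 0)"
  proof (cases "a = b")
    case True
    then show ?thesis using \<epsilon>_L2[of a] \<epsilon>_var[of a] by (simp add: power2_eq_square)
  next
    case False
    have ind: "indep_vars (\<lambda>_. borel) \<epsilon> {a, b}" by (rule indep_vars_subset[OF \<epsilon>_indep]) auto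
    have pr: "(\<lambda>\<omega>. \<Prod>i\<in>{a,b}. \<epsilon> i \<omega>) = (\<lambda>\<omega>. \<epsilon> a \<omega> * \<epsilon> b \<omega>)" using False by simp
    have "integrable M (\<lambda>\<omega>. \<Prod>i\<in>{a,b}. \<epsilon> i \<omega>)"
      by (rule indep_vars_integrable[OF _ ind]) (auto intro: eps_int)
    moreover have "expectation (\<lambda>\<omega>. \<Prod>i\<in>{a,b}. \<epsilon> i \<omega>) = (\<Prod>i\<in>{a,b}. expectation (\<epsilon> i))"
      by (rule indep_vars_lebesgue_integral[OF _ ind]) (auto intro: eps_int)
    ultimately show ?thesis unfolding pr using False \<epsilon>_mean by simp
  qed
  then show "integrable M (\<lambda>\<omega>. \<epsilon> a \<omega> * \<epsilon> b \<omega>)"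
    "expectation (\<lambda>\<omega>. \<epsilon> a \<omega> * \<epsilon> b \<omega>) = (if a = b then \<sigma>2 a else 0)" by auto
qed

lemma lin_cov:
  assumes "finite A" "finite B"
  shows "integrable M (\<lambda>\<omega>. (\<Sum>j\<in>A. c j * \<epsilon> (f j) \<omega>) * (\<Sum>l\<in>B. e l * \<epsilon> (g l) \<omega>))"
    and "expectation (\<lambda>\<omega>. (\<Sum>j\<in>A. c j * \<epsilon> (f j) \<omega>) * (\<Sum>l\<in>B. e l * \<epsilon> (g l) \<omega>))
       = (\<Sum>j\<in>A. \<Sum>l\<in>B. c j * e l * (if f j = g l then \<sigma>2 (f j) else 0))"
proof -
  have eq: "(\<lambda>\<omega>. (\<Sum>j\<in>A. c j * \<epsilon> (f j) \<omega>) * (\<Sum>l\<in>B. e l * \<epsilon> (g l) \<omega>))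
      = (\<lambda>\<omega>. \<Sum>j\<in>A. \<Sum>l\<in>B. c j * e l * (\<epsilon> (f j) \<omega> * \<epsilon> (g l) \<omega>))"
    by (simp add: sum_product mult_ac)
  show "integrable M (\<lambda>\<omega>. (\<Sum>j\<in>A. c j * \<epsilon> (f j) \<omega>) * (\<Sum>l\<in>B. e l * \<epsilon> (g l) \<omega>))"
    unfolding eq by (intro Bochner_Integration.integrable_sum integrable_mult_right eps_prod(1))
  show "expectation (\<lambda>\<omega>. (\<Sum>j\<in>A. c j * \<epsilon> (f j) \<omega>) * (\<Sum>l\<in>B. e l * \<epsilon> (g l) \<omega>))
       = (\<Sum>j\<in>A. \<Sum>l\<in>B. c j * e l * (if f j = g l then \<sigma>2 (f j) else 0))"
    unfolding eq
    by (simp add: Bochner_Integration.integral_sum Bochner_Integration.integrable_sum integrable_mult_right eps_prod)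
qed


definition S :: "int \<Rightarrow> nat \<Rightarrow> 'a \<Rightarrow> real" where
  "S t n \<omega> = (\<Sum>j<n. arfima_psi (d t) j * \<epsilon> (t - int j) \<omega>)"

definition v :: "int \<Rightarrow> nat \<Rightarrow> real" where
  "v t j = (arfima_psi (d t) j)\<^sup>2 * \<sigma>2 (t - int j)"

lemma S_meas[measurable]: "S t n \<in> borel_measurable M"
  unfolding S_def by measurable

lemma v_nonneg: "v t j \<ge> 0"
  unfolding v_def using \<sigma>_pos_all[of "t - int j"] by simp

lemma v_summable: "summable (v t)"
proof (rule summable_comparison_test)
  have dd: "d t > 0" "d t \<le> 1" "d t + d t < 1" using d_pos[of t] d_half[of t] by auto
  show "summable (\<lambda>j. Smax * (arfima_psi (d t) (j + 0) * arfima_psi (d t) j))"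
    by (intro summable_mult summable_psi_prod dd)
  show "\<exists>N. \<forall>n\<ge>N. norm (v t n) \<le> Smax * (arfima_psi (d t) (n + 0) * arfima_psi (d t) n)"
  proof (intro exI[of _ 0] allI impI)
    fix n :: nat
    have "(arfima_psi (d t) n)\<^sup>2 * \<sigma>2 (t - int n) \<le> (arfima_psi (d t) n)\<^sup>2 * Smax"
      by (intro mult_left_mono \<sigma>_le) simp
    then show "norm (v t n) \<le> Smax * (arfima_psi (d t) (n + 0) * arfima_psi (d t) n)"
      using v_nonneg[of t n] unfolding v_def by (simp add: power2_eq_square mult_ac)
  qed
qed

lemma S_diff: "n \<le> m \<Longrightarrow> S t m \<omega> - S t n \<omega> = (\<Sum>j\<in>{n..<m}. arfima_psi (d t) j * \<epsilon> (t - int j) \<omega>)"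
  unfolding S_def lessThan_atLeast0 using sum.atLeastLessThan_concat[of 0 n m "\<lambda>j. arfima_psi (d t) j * \<epsilon> (t - int j) \<omega>"] by linarith

lemma delta_collapse:
  fixes c s :: "nat \<Rightarrow> real"
  assumes "finite A"
  shows "(\<Sum>j\<in>A. \<Sum>l\<in>A. c j * c l * (if j = l then s j else 0)) = (\<Sum>j\<in>A. (c j)\<^sup>2 * s j)"
proof (rule sum.cong[OF refl])
  fix j assume j: "j \<in> A"
  have "(\<Sum>l\<in>A. c j * c l * (if j = l then s j else 0)) = (\<Sum>l\<in>A. if l = j then c j * c j * s j else 0)"
    by (rule sum.cong) auto
  also have "\<dots> = (c j)\<^sup>2 * s j" using j assms by (simp add: power2_eq_square)
  finally show "(\<Sum>l\<in>A. c j * c l * (if j = l then s j else 0)) = (c j)\<^sup>2 * s j" .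
qed

lemma D_sq: assumes "n \<le> m"
  shows "integrable M (\<lambda>\<omega>. (S t m \<omega> - S t n \<omega>)\<^sup>2)"
    and "expectation (\<lambda>\<omega>. (S t m \<omega> - S t n \<omega>)\<^sup>2) = (\<Sum>j\<in>{n..<m}. v t j)"
proof -
  have eq: "(\<lambda>\<omega>. (S t m \<omega> - S t n \<omega>)\<^sup>2) = (\<lambda>\<omega>. (\<Sum>j\<in>{n..<m}. arfima_psi (d t) j * \<epsilon> (t - int j) \<omega>) * (\<Sum>j\<in>{n..<m}. arfima_psi (d t) j * \<epsilon> (t - int j) \<omega>))"
    using assms by (simp add: S_diff power2_eq_square)
  show "integrable M (\<lambda>\<omega>. (S t m \<omega> - S t n \<omega>)\<^sup>2)" unfolding eq by (rule lin_cov) auto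
  show "expectation (\<lambda>\<omega>. (S t m \<omega> - S t n \<omega>)\<^sup>2) = (\<Sum>j\<in>{n..<m}. v t j)"
    unfolding eq lin_cov(2)[OF finite_atLeastLessThan finite_atLeastLessThan]
    using delta_collapse[of "{n..<m}" "arfima_psi (d t)" "\<lambda>j. \<sigma>2 (t - int j)"] by (simp add: v_def)
qed

lemma S_sq: "integrable M (\<lambda>\<omega>. (S t n \<omega>)\<^sup>2)" "expectation (\<lambda>\<omega>. (S t n \<omega>)\<^sup>2) = (\<Sum>j<n. v t j)"
  using D_sq[of 0 n t] by (simp_all add: S_def lessThan_atLeast0)

definition tail :: "int \<Rightarrow> nat \<Rightarrow> real" where
  "tail t n = suminf (v t) - (\<Sum>j<n. v t j)"

lemma tail_to_0: "tail t \<longlonglongrightarrow> 0"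
proof -
  have "(\<lambda>n. suminf (v t) - (\<Sum>j<n. v t j)) \<longlonglongrightarrow> suminf (v t) - suminf (v t)"
    by (intro tendsto_intros summable_LIMSEQ v_summable)
  then show ?thesis unfolding tail_def by simp
qed

lemma partial_le: "(\<Sum>j<m. v t j) \<le> suminf (v t)"
  by (rule sum_le_suminf[OF v_summable]) (auto intro: v_nonneg)

lemma block_le_tail: "n \<le> m \<Longrightarrow> (\<Sum>j\<in>{n..<m}. v t j) \<le> tail t n"
  unfolding tail_def using partial_le[where m=m and t=t] sum.atLeastLessThan_concat[of 0 n m "v t"]
  by (simp add: lessThan_atLeast0)

lemma tail_nonneg: "tail t n \<ge> 0"
  using block_le_tail[of n n t] by simp

lemma X_approx: "integrable M (\<lambda>\<omega>. (X t \<omega> - S t n \<omega>)\<^sup>2)"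
  "expectation (\<lambda>\<omega>. (X t \<omega> - S t n \<omega>)\<^sup>2) \<le> tail t n"
proof -
  have AE: "AE \<omega> in M. (\<lambda>m. ennreal ((S t m \<omega> - S t n \<omega>)\<^sup>2)) \<longlonglongrightarrow> ennreal ((X t \<omega> - S t n \<omega>)\<^sup>2)"
    using X_MA[of t] by eventually_elim (auto intro!: tendsto_intros simp: S_def)
  have "(\<integral>\<^sup>+\<omega>. ennreal ((X t \<omega> - S t n \<omega>)\<^sup>2) \<partial>M) = (\<integral>\<^sup>+\<omega>. liminf (\<lambda>m. ennreal ((S t m \<omega> - S t n \<omega>)\<^sup>2)) \<partial>M)"
  proof (rule nn_integral_cong_AE)
    show "AE \<omega> in M. ennreal ((X t \<omega> - S t n \<omega>)\<^sup>2) = liminf (\<lambda>m. ennreal ((S t m \<omega> - S t n \<omega>)\<^sup>2))"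
      using AE by eventually_elim (metis lim_imp_Liminf trivial_limit_sequentially)
  qed
  also have "\<dots> \<le> liminf (\<lambda>m. \<integral>\<^sup>+\<omega>. ennreal ((S t m \<omega> - S t n \<omega>)\<^sup>2) \<partial>M)"
    by (rule nn_integral_liminf) measurable
  also have "\<dots> \<le> liminf (\<lambda>m. ennreal (tail t n))"
  proof (rule Liminf_mono)
    show "eventually (\<lambda>m. (\<integral>\<^sup>+\<omega>. ennreal ((S t m \<omega> - S t n \<omega>)\<^sup>2) \<partial>M) \<le> ennreal (tail t n)) sequentially"
      using eventually_ge_at_top[of n]
    proof eventually_elim
      case (elim m)
      have "(\<integral>\<^sup>+\<omega>. ennreal ((S t m \<omega> - S t n \<omega>)\<^sup>2) \<partial>M) = ennreal (expectation (\<lambda>\<omega>. (S t m \<omega> - S t n \<omega>)\<^sup>2))"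
        by (rule nn_integral_eq_integral[OF D_sq(1)[OF elim]]) auto
      also have "\<dots> \<le> ennreal (tail t n)"
        using D_sq(2)[OF elim] block_le_tail[OF elim] by (simp add: ennreal_leI)
      finally show ?case .
    qed
  qed
  also have "\<dots> = ennreal (tail t n)" by (simp add: Liminf_const)
  finally have le: "(\<integral>\<^sup>+\<omega>. ennreal ((X t \<omega> - S t n \<omega>)\<^sup>2) \<partial>M) \<le> ennreal (tail t n)" .
  show int: "integrable M (\<lambda>\<omega>. (X t \<omega> - S t n \<omega>)\<^sup>2)"
    by (rule integrableI_nonneg) (use le in \<open>auto simp: top.not_eq_extremum intro: le_less_trans\<close>)
  have "expectation (\<lambda>\<omega>. (X t \<omega> - S t n \<omega>)\<^sup>2) = enn2real (\<integral>\<^sup>+\<omega>. ennreal ((X t \<omega> - S t n \<omega>)\<^sup>2) \<partial>M)"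
    by (rule integral_eq_nn_integral) auto
  also have "\<dots> \<le> enn2real (ennreal (tail t n))" by (rule enn2real_mono[OF le]) simp
  also have "\<dots> = tail t n" using tail_nonneg by simp
  finally show "expectation (\<lambda>\<omega>. (X t \<omega> - S t n \<omega>)\<^sup>2) \<le> tail t n" .
qed

lemma X_sq: "integrable M (\<lambda>\<omega>. (X t \<omega>)\<^sup>2)"
proof (rule Bochner_Integration.integrable_bound)
  show "integrable M (\<lambda>\<omega>. 2 * (X t \<omega> - S t 0 \<omega>)\<^sup>2 + 2 * (S t 0 \<omega>)\<^sup>2)"
    by (intro Bochner_Integration.integrable_add integrable_mult_right X_approx S_sq)
  show "AE \<omega> in M. norm ((X t \<omega>)\<^sup>2) \<le> norm (2 * (X t \<omega> - S t 0 \<omega>)\<^sup>2 + 2 * (S t 0 \<omega>)\<^sup>2)"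
    by (simp add: S_def)
qed measurable


end


lemma cs_real:
  fixes A B c :: real
  assumes A: "A \<ge> 0" and B: "B \<ge> 0" and H: "\<And>s. s > 0 \<Longrightarrow> 2 * c \<le> s * A + B / s"
  shows "c \<le> sqrt A * sqrt B"
proof (cases "A > 0 \<and> B > 0")
  case True
  define s where "s = sqrt B / sqrt A"
  have sp: "s > 0" unfolding s_def using True by simp
  have sa: "sqrt A > 0" "sqrt B > 0" using True by auto
  have aa: "sqrt A * sqrt A = A" "sqrt B * sqrt B = B" using A B by simp_all
  have g1: "y / x * (x * x) = x * y" if "x > 0" for x y :: real using that by (simp add: field_simps)
  have g2: "(y * y) / (y / x) = x * y" if "x > 0" "y > 0" for x y :: real using that by (simp add: field_simps)
  have "s * A = sqrt B / sqrt A * (sqrt A * sqrt A)" unfolding s_def using aa by simp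
  also have "\<dots> = sqrt A * sqrt B" by (rule g1[OF sa(1)])
  finally have e1: "s * A = sqrt A * sqrt B" .
  have "B / s = (sqrt B * sqrt B) / (sqrt B / sqrt A)" using aa unfolding s_def by simp
  also have "\<dots> = sqrt A * sqrt B" by (rule g2[OF sa])
  finally have e2: "B / s = sqrt A * sqrt B" .
  show ?thesis using H[OF sp] e1 e2 by simp
next
  case False
  show ?thesis
  proof (rule ccontr)
    assume c: "\<not> c \<le> sqrt A * sqrt B"
    then have c0: "c > 0" using False A B by (auto simp: not_le)
    show False
    proof (cases "A = 0")
      case True
      have sp: "(B + 1) / c > 0" using c0 B by simp
      have "2 * c \<le> B / ((B + 1) / c)" using H[OF sp] True by simp
      also have "\<dots> = B * c / (B + 1)" using B by simp
      also have "\<dots> < c" using c0 B by (simp add: field_simps)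
      finally show False using c0 by simp
    next
      case False
      then have B0: "B = 0" using \<open>\<not> (A > 0 \<and> B > 0)\<close> A B by auto
      have sp: "c / (A + 1) > 0" using c0 A by simp
      have "2 * c \<le> c / (A + 1) * A" using H[OF sp] B0 by simp
      also have "\<dots> < c" using c0 A by (simp add: field_simps)
      finally show False using c0 by simp
    qed
  qed
qed

lemma (in prob_space) cs:
  fixes u v :: "'a \<Rightarrow> real"
  assumes [measurable]: "u \<in> borel_measurable M" "v \<in> borel_measurable M"
    and iu: "integrable M (\<lambda>\<omega>. (u \<omega>)\<^sup>2)" and iv: "integrable M (\<lambda>\<omega>. (v \<omega>)\<^sup>2)"
  shows "integrable M (\<lambda>\<omega>. u \<omega> * v \<omega>)"
    and "\<bar>expectation (\<lambda>\<omega>. u \<omega> * v \<omega>)\<bar> \<le> sqrt (expectation (\<lambda>\<omega>. (u \<omega>)\<^sup>2)) * sqrt (expectation (\<lambda>\<omega>. (v \<omega>)\<^sup>2))"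
proof -
  have pw: "2 * \<bar>x * y\<bar> \<le> s * x\<^sup>2 + y\<^sup>2 / s" if "s > 0" for s x y :: real
  proof -
    have "0 \<le> (s * \<bar>x\<bar> - \<bar>y\<bar>)\<^sup>2" by simp
    then have "2 * s * \<bar>x * y\<bar> \<le> s\<^sup>2 * x\<^sup>2 + y\<^sup>2"
      by (simp add: power2_eq_square algebra_simps abs_mult)
    then show ?thesis using that by (simp add: field_simps power2_eq_square)
  qed
  show int: "integrable M (\<lambda>\<omega>. u \<omega> * v \<omega>)"
  proof (rule Bochner_Integration.integrable_bound)
    show "integrable M (\<lambda>\<omega>. (u \<omega>)\<^sup>2 + (v \<omega>)\<^sup>2)" using iu iv by simp
    show "AE \<omega> in M. norm (u \<omega> * v \<omega>) \<le> norm ((u \<omega>)\<^sup>2 + (v \<omega>)\<^sup>2)"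
    proof (rule AE_I2)
      fix \<omega>
      have "\<bar>u \<omega> * v \<omega>\<bar> \<le> (u \<omega>)\<^sup>2 + (v \<omega>)\<^sup>2" using pw[of 1 "u \<omega>" "v \<omega>"] abs_ge_zero[of "u \<omega> * v \<omega>"] by simp
      then show "norm (u \<omega> * v \<omega>) \<le> norm ((u \<omega>)\<^sup>2 + (v \<omega>)\<^sup>2)" by simp
    qed
  qed measurable
  show "\<bar>expectation (\<lambda>\<omega>. u \<omega> * v \<omega>)\<bar> \<le> sqrt (expectation (\<lambda>\<omega>. (u \<omega>)\<^sup>2)) * sqrt (expectation (\<lambda>\<omega>. (v \<omega>)\<^sup>2))"
  proof (rule cs_real)
    show "expectation (\<lambda>\<omega>. (u \<omega>)\<^sup>2) \<ge> 0" "expectation (\<lambda>\<omega>. (v \<omega>)\<^sup>2) \<ge> 0" by simp_all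
    fix s :: real assume s: "s > 0"
    have "\<bar>expectation (\<lambda>\<omega>. u \<omega> * v \<omega>)\<bar> \<le> expectation (\<lambda>\<omega>. \<bar>u \<omega> * v \<omega>\<bar>)"
      by (rule integral_abs_bound)
    then have "2 * \<bar>expectation (\<lambda>\<omega>. u \<omega> * v \<omega>)\<bar> \<le> expectation (\<lambda>\<omega>. 2 * \<bar>u \<omega> * v \<omega>\<bar>)" by simp
    also have "\<dots> \<le> expectation (\<lambda>\<omega>. s * (u \<omega>)\<^sup>2 + (v \<omega>)\<^sup>2 / s)"
      by (rule integral_mono) (use int iu iv pw[OF s] in auto)
    also have "\<dots> = s * expectation (\<lambda>\<omega>. (u \<omega>)\<^sup>2) + expectation (\<lambda>\<omega>. (v \<omega>)\<^sup>2) / s"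
      using iu iv by simp
    finally show "2 * \<bar>expectation (\<lambda>\<omega>. u \<omega> * v \<omega>)\<bar> \<le> s * expectation (\<lambda>\<omega>. (u \<omega>)\<^sup>2) + expectation (\<lambda>\<omega>. (v \<omega>)\<^sup>2) / s" .
  qed
qed


context ptv begin

lemma S_mean: "expectation (S t n) = 0"
  unfolding S_def[abs_def]
  by (simp add: Bochner_Integration.integral_sum Bochner_Integration.integrable_sum integrable_mult_right eps_int \<epsilon>_mean)

lemma X_mean: "expectation (X t) = 0"
proof -
  have bnd: "\<bar>expectation (X t)\<bar> \<le> sqrt (tail t n)" for n
  proof -
    have c: "\<bar>expectation (\<lambda>\<omega>. (X t \<omega> - S t n \<omega>) * 1)\<bar> \<le> sqrt (expectation (\<lambda>\<omega>. (X t \<omega> - S t n \<omega>)\<^sup>2)) * sqrt (expectation (\<lambda>\<omega>. 1\<^sup>2))"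
      by (rule cs(2)) (auto intro: X_approx)
    have i1: "integrable M (\<lambda>\<omega>. X t \<omega> - S t n \<omega>)" using cs(1)[of "\<lambda>\<omega>. X t \<omega> - S t n \<omega>" "\<lambda>_. 1"] X_approx(1) by simp
    have iS: "integrable M (S t n)" unfolding S_def[abs_def]
      by (intro Bochner_Integration.integrable_sum integrable_mult_right eps_int)
    have iX: "integrable M (X t)" using Bochner_Integration.integrable_add[OF i1 iS] by simp
    have "expectation (X t) = expectation (\<lambda>\<omega>. X t \<omega> - S t n \<omega>)"
      using Bochner_Integration.integral_diff[OF iX iS] S_mean by simp
    also have "\<bar>\<dots>\<bar> \<le> sqrt (tail t n)"
      using c X_approx(2)[of t n] by (simp add: prob_space) (meson order.trans real_sqrt_le_iff)
    finally show ?thesis .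
  qed
  have "(\<lambda>n. sqrt (tail t n)) \<longlonglongrightarrow> sqrt 0" by (intro tendsto_intros tail_to_0)
  then have "\<bar>expectation (X t)\<bar> \<le> 0"
    using bnd by (intro tendsto_lowerbound[OF _ always_eventually]) auto
  then show ?thesis by simp
qed

lemma cross_conv:
  shows "integrable M (\<lambda>\<omega>. X t \<omega> * X s \<omega>)"
    and "(\<lambda>n. expectation (\<lambda>\<omega>. S t n \<omega> * S s n \<omega>)) \<longlonglongrightarrow> expectation (\<lambda>\<omega>. X t \<omega> * X s \<omega>)"
proof -
  show iXX: "integrable M (\<lambda>\<omega>. X t \<omega> * X s \<omega>)" by (rule cs(1)) (auto intro: X_sq)
  have bnd: "\<bar>expectation (\<lambda>\<omega>. X t \<omega> * X s \<omega>) - expectation (\<lambda>\<omega>. S t n \<omega> * S s n \<omega>)\<bar>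
      \<le> sqrt (tail t n) * sqrt (expectation (\<lambda>\<omega>. (X s \<omega>)\<^sup>2)) + sqrt (suminf (v t)) * sqrt (tail s n)" for n
  proof -
    have i1: "integrable M (\<lambda>\<omega>. (X t \<omega> - S t n \<omega>) * X s \<omega>)" by (rule cs(1)) (auto intro: X_sq X_approx)
    have c1: "\<bar>expectation (\<lambda>\<omega>. (X t \<omega> - S t n \<omega>) * X s \<omega>)\<bar> \<le> sqrt (tail t n) * sqrt (expectation (\<lambda>\<omega>. (X s \<omega>)\<^sup>2))"
    proof -
      have "\<bar>expectation (\<lambda>\<omega>. (X t \<omega> - S t n \<omega>) * X s \<omega>)\<bar> \<le> sqrt (expectation (\<lambda>\<omega>. (X t \<omega> - S t n \<omega>)\<^sup>2)) * sqrt (expectation (\<lambda>\<omega>. (X s \<omega>)\<^sup>2))"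
        by (rule cs(2)) (auto intro: X_sq X_approx)
      also have "\<dots> \<le> sqrt (tail t n) * sqrt (expectation (\<lambda>\<omega>. (X s \<omega>)\<^sup>2))"
        by (intro mult_right_mono real_sqrt_le_mono X_approx(2)) simp
      finally show ?thesis .
    qed
    have i2: "integrable M (\<lambda>\<omega>. S t n \<omega> * (X s \<omega> - S s n \<omega>))" by (rule cs(1)) (auto intro: S_sq X_approx)
    have c2: "\<bar>expectation (\<lambda>\<omega>. S t n \<omega> * (X s \<omega> - S s n \<omega>))\<bar> \<le> sqrt (suminf (v t)) * sqrt (tail s n)"
    proof -
      have "\<bar>expectation (\<lambda>\<omega>. S t n \<omega> * (X s \<omega> - S s n \<omega>))\<bar> \<le> sqrt (expectation (\<lambda>\<omega>. (S t n \<omega>)\<^sup>2)) * sqrt (expectation (\<lambda>\<omega>. (X s \<omega> - S s n \<omega>)\<^sup>2))"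
        by (rule cs(2)) (auto intro: S_sq X_approx)
      also have "\<dots> \<le> sqrt (suminf (v t)) * sqrt (tail s n)"
        using S_sq(2)[of t n] partial_le[where m=n and t=t] X_approx(2)[of s n] suminf_nonneg[OF v_summable v_nonneg, of t]
        by (intro mult_mono) auto
      finally show ?thesis .
    qed
    have iSS: "integrable M (\<lambda>\<omega>. S t n \<omega> * S s n \<omega>)" by (rule cs(1)) (auto intro: S_sq)
    have "expectation (\<lambda>\<omega>. X t \<omega> * X s \<omega>) - expectation (\<lambda>\<omega>. S t n \<omega> * S s n \<omega>)
        = expectation (\<lambda>\<omega>. (X t \<omega> - S t n \<omega>) * X s \<omega>) + expectation (\<lambda>\<omega>. S t n \<omega> * (X s \<omega> - S s n \<omega>))"
    proof -
      have "(\<lambda>\<omega>. X t \<omega> * X s \<omega>) = (\<lambda>\<omega>. ((X t \<omega> - S t n \<omega>) * X s \<omega> + S t n \<omega> * (X s \<omega> - S s n \<omega>)) + S t n \<omega> * S s n \<omega>)"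
        by (simp add: algebra_simps)
      then have "expectation (\<lambda>\<omega>. X t \<omega> * X s \<omega>) = expectation (\<lambda>\<omega>. (X t \<omega> - S t n \<omega>) * X s \<omega> + S t n \<omega> * (X s \<omega> - S s n \<omega>)) + expectation (\<lambda>\<omega>. S t n \<omega> * S s n \<omega>)"
        using i1 i2 iSS by simp
      then show ?thesis using i1 i2 by simp
    qed
    then show ?thesis using c1 c2 by linarith
  qed
  have "(\<lambda>n. sqrt (tail t n) * sqrt (expectation (\<lambda>\<omega>. (X s \<omega>)\<^sup>2)) + sqrt (suminf (v t)) * sqrt (tail s n))
      \<longlonglongrightarrow> sqrt 0 * sqrt (expectation (\<lambda>\<omega>. (X s \<omega>)\<^sup>2)) + sqrt (suminf (v t)) * sqrt 0"
    by (intro tendsto_intros tail_to_0)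
  then have "(\<lambda>n. sqrt (tail t n) * sqrt (expectation (\<lambda>\<omega>. (X s \<omega>)\<^sup>2)) + sqrt (suminf (v t)) * sqrt (tail s n)) \<longlonglongrightarrow> 0"
    by simp
  then have L: "(\<lambda>n. expectation (\<lambda>\<omega>. X t \<omega> * X s \<omega>) - expectation (\<lambda>\<omega>. S t n \<omega> * S s n \<omega>)) \<longlonglongrightarrow> 0"
    by (rule Lim_null_comparison[OF always_eventually, rotated]) (unfold real_norm_def, rule allI, rule bnd)
  have "(\<lambda>n. expectation (\<lambda>\<omega>. X t \<omega> * X s \<omega>) - (expectation (\<lambda>\<omega>. X t \<omega> * X s \<omega>) - expectation (\<lambda>\<omega>. S t n \<omega> * S s n \<omega>)))
      \<longlonglongrightarrow> expectation (\<lambda>\<omega>. X t \<omega> * X s \<omega>) - 0"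
    by (rule tendsto_diff[OF tendsto_const L])
  then show "(\<lambda>n. expectation (\<lambda>\<omega>. S t n \<omega> * S s n \<omega>)) \<longlonglongrightarrow> expectation (\<lambda>\<omega>. X t \<omega> * X s \<omega>)" by simp
qed


end


context ptv begin

definition cc :: "int \<Rightarrow> int \<Rightarrow> nat \<Rightarrow> real" where
  "cc t s n = (\<Sum>j<n. \<Sum>l<n. arfima_psi (d t) j * arfima_psi (d s) l * (if t - int j = s - int l then \<sigma>2 (t - int j) else 0))"

lemma SS_eq: "expectation (\<lambda>\<omega>. S t n \<omega> * S s n \<omega>) = cc t s n"
  unfolding S_def cc_def by (rule lin_cov(2)) auto

lemma XX_lim: "cc t s \<longlonglongrightarrow> expectation (\<lambda>\<omega>. X t \<omega> * X s \<omega>)"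
  using cross_conv(2)[of t s] unfolding SS_eq .

lemma stationary: "expectation (\<lambda>\<omega>. X (t + p * m) \<omega> * X (s + p * m) \<omega>) = expectation (\<lambda>\<omega>. X t \<omega> * X s \<omega>)"
proof -
  have dt: "d (t + p * m) = d t" "d (s + p * m) = d s"
    by (rule per_shift[where f=d and p=p, OF d_per])+
  have sg: "\<sigma>2 (t + p * m - int j) = \<sigma>2 (t - int j)" for j
    using per_shift[where f=\<sigma>2 and p=p and t="t - int j" and m=m, OF \<sigma>_per] by (simp add: algebra_simps)
  have "cc (t + p * m) (s + p * m) = cc t s"
    unfolding cc_def dt sg by (intro ext sum.cong refl) (auto simp: sg)
  then show ?thesis using LIMSEQ_unique[OF XX_lim[of "t + p * m" "s + p * m"]] XX_lim[of t s] by simp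
qed

lemma cov_Gw: assumes "s \<le> t"
  shows "expectation (\<lambda>\<omega>. X t \<omega> * X s \<omega>) = Gw (d t) (d s) (\<lambda>l. \<sigma>2 (s - int l)) (nat (t - s))"
proof -
  define N where "N = nat (t - s)"
  have tN: "t = s + int N" unfolding N_def using assms by simp
  define F where "F l = \<sigma>2 (s - int l) * (arfima_psi (d t) (l + N) * arfima_psi (d s) l)" for l
  have ab: "d t > 0" "d s > 0" "d t \<le> 1" "d t + d s < 1" using d_pos[of t] d_pos[of s] d_half[of t] d_half[of s] by auto
  have Fs: "summable F"
  proof (rule summable_comparison_test)
    show "summable (\<lambda>l. Smax * (arfima_psi (d t) (l + N) * arfima_psi (d s) l))"
      by (intro summable_mult summable_psi_prod ab)
    show "\<exists>M. \<forall>n\<ge>M. norm (F n) \<le> Smax * (arfima_psi (d t) (n + N) * arfima_psi (d s) n)"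
    proof (intro exI[of _ 0] allI impI)
      fix n :: nat
      have h1: "0 \<le> arfima_psi (d t) (n + N) * arfima_psi (d s) n"
        using psi_pos[OF ab(1)] psi_pos[OF ab(2)] by (auto intro: less_imp_le)
      have h2: "0 < \<sigma>2 (s - int n)" by (rule \<sigma>_pos_all)
      show "norm (F n) \<le> Smax * (arfima_psi (d t) (n + N) * arfima_psi (d s) n)"
      proof -
        have "norm (F n) = \<sigma>2 (s - int n) * (arfima_psi (d t) (n + N) * arfima_psi (d s) n)"
          unfolding F_def using h1 h2 by (simp add: abs_mult[symmetric])
        also have "\<dots> \<le> Smax * (arfima_psi (d t) (n + N) * arfima_psi (d s) n)"
          by (rule mult_right_mono[OF \<sigma>_le]) (use h1 in simp)
        finally show ?thesis .
      qed
    qed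
  qed
  have cc_eq: "cc t s n = (\<Sum>l<n - N. F l)" for n
  proof -
    have "cc t s n = (\<Sum>l<n. \<Sum>j<n. arfima_psi (d t) j * arfima_psi (d s) l * (if t - int j = s - int l then \<sigma>2 (t - int j) else 0))"
      unfolding cc_def by (rule sum.swap)
    also have "\<dots> = (\<Sum>l<n. if l + N < n then F l else 0)"
    proof (rule sum.cong[OF refl])
      fix l assume "l \<in> {..<n}"
      have "(\<Sum>j<n. arfima_psi (d t) j * arfima_psi (d s) l * (if t - int j = s - int l then \<sigma>2 (t - int j) else 0))
          = (\<Sum>j<n. if j = l + N then F l else 0)"
        by (rule sum.cong[OF refl]) (auto simp: tN F_def)
      also have "\<dots> = (if l + N < n then F l else 0)" by simp
      finally show "(\<Sum>j<n. arfima_psi (d t) j * arfima_psi (d s) l * (if t - int j = s - int l then \<sigma>2 (t - int j) else 0)) = (if l + N < n then F l else 0)" .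
    qed
    also have "\<dots> = (\<Sum>l\<in>{..<n} \<inter> {l. l + N < n}. F l)"
      by (simp add: sum.inter_restrict)
    also have "{..<n} \<inter> {l. l + N < n} = {..<n - N}" by auto
    finally show ?thesis .
  qed
  have "(\<lambda>n. cc t s (n + N)) \<longlonglongrightarrow> suminf F"
    unfolding cc_eq using summable_LIMSEQ[OF Fs] by simp
  then have "cc t s \<longlonglongrightarrow> suminf F" by (rule LIMSEQ_offset)
  then have "expectation (\<lambda>\<omega>. X t \<omega> * X s \<omega>) = suminf F" using LIMSEQ_unique XX_lim by blast
  also have "suminf F = Gw (d t) (d s) (\<lambda>l. \<sigma>2 (s - int l)) N" unfolding Gw_def F_def ..
  finally show ?thesis unfolding N_def .
qed

end

theorem proposition2p1:
  fixes M :: "'a measure"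
    and p :: int
    and d :: "int \<Rightarrow> real"
    and \<sigma>2 :: "int \<Rightarrow> real"
    and \<epsilon> :: "int \<Rightarrow> 'a \<Rightarrow> real"
    and X :: "int \<Rightarrow> 'a \<Rightarrow> real"
  assumes "prob_space M"
    and "p \<ge> 2"
    and d_per: "\<And>t. d (t + p) = d t"
    and d_range: "\<And>i. i \<in> {1..p} \<Longrightarrow> 0 < d i \<and> d i < 1/2"
    and \<sigma>_per: "\<And>t. \<sigma>2 (t + p) = \<sigma>2 t"
    and \<sigma>_pos: "\<And>i. i \<in> {1..p} \<Longrightarrow> \<sigma>2 i > 0"
    and \<epsilon>_rv: "\<And>t. \<epsilon> t \<in> borel_measurable M"
    and \<epsilon>_indep: "prob_space.indep_vars M (\<lambda>_. borel) \<epsilon> UNIV"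
    and \<epsilon>_L2: "\<And>t. integrable M (\<lambda>\<omega>. (\<epsilon> t \<omega>)\<^sup>2)"
    and \<epsilon>_mean: "\<And>t. prob_space.expectation M (\<epsilon> t) = 0"
    and \<epsilon>_var: "\<And>t. prob_space.expectation M (\<lambda>\<omega>. (\<epsilon> t \<omega>)\<^sup>2) = \<sigma>2 t"
    and X_rv: "\<And>t. X t \<in> borel_measurable M"
    and X_MA: "\<And>t. AE \<omega> in M.
        (\<lambda>n. \<Sum>j<n. arfima_psi (d t) j * \<epsilon> (t - int j) \<omega>) \<longlonglongrightarrow> X t \<omega>"
  shows "\<exists>R :: int \<Rightarrow> int \<Rightarrow> real.
     (\<forall>i\<in>{1..p}. \<forall>k\<in>{1..p}. R i k > 0) \<and>
     (\<forall>t. integrable M (\<lambda>\<omega>. (X t \<omega>)\<^sup>2) \<and> prob_space.expectation M (X t) = 0) \<and>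
     (\<forall>i\<in>{1..p}. \<forall>k\<in>{1..p}. \<forall>m h.
        prob_space.expectation M (\<lambda>\<omega>. X (i + p * (m + h)) \<omega> * X (k + p * m) \<omega>)
        = prob_space.expectation M (\<lambda>\<omega>. X (i + p * h) \<omega> * X k \<omega>)) \<and>
     (\<forall>i\<in>{1..p}. \<forall>k\<in>{1..p}.
        (\<lambda>h::nat. prob_space.expectation M (\<lambda>\<omega>. X (i + p * int h) \<omega> * X k \<omega>))
          \<sim>[at_top] (\<lambda>h. \<sigma>2 i * R i k * real h powr (d i + d k - 1)))"
proof -
  interpret ptv M p d \<sigma>2 \<epsilon> X
    by (intro ptv.intro ptv_axioms.intro; rule assms)
  define asym where "asym i k C \<longleftrightarrow> C > 0 \<and>
     (\<lambda>h::nat. expectation (\<lambda>\<omega>. X (i + p * int h) \<omega> * X k \<omega>)) \<sim>[at_top] (\<lambda>h. C * real h powr (d i + d k - 1))"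
    for i k C
  have ex: "\<exists>C. asym i k C" if ik: "i \<in> {1..p}" "k \<in> {1..p}" for i k
  proof -
    define q where "q = nat p"
    have q: "q > 0" "int q = p" unfolding q_def using p_pos by auto
    define w where "w l = \<sigma>2 (k - int l)" for l
    have ab: "d i > 0" "d k > 0" "d i \<le> 1" "d i + d k < 1"
      using d_pos[of i] d_pos[of k] d_half[of i] d_half[of k] by auto
    have wper: "w (u + q) = w u" for u
      unfolding w_def using \<sigma>_per[of "k - int u - p"] q by (simp add: algebra_simps)
    have wnn: "w u \<ge> 0" for u unfolding w_def using \<sigma>_pos_all by (simp add: less_imp_le)
    have Wpos: "(\<Sum>r<q. w r) > 0" unfolding w_def using q \<sigma>_pos_all by (intro sum_pos) auto
    obtain C where C: "C > 0" "(\<lambda>h::nat. Gw (d i) (d k) w (nat (int q * int h + (i - k)))) \<sim>[at_top] (\<lambda>h. C * real h powr (d i + d k - 1))"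
      using Gw_asymp_shift[where w=w and p=q and c="i - k", OF ab q(1) wper wnn Wpos] by blast
    have ev: "eventually (\<lambda>h::nat. expectation (\<lambda>\<omega>. X (i + p * int h) \<omega> * X k \<omega>) = Gw (d i) (d k) w (nat (int q * int h + (i - k)))) at_top"
      using eventually_ge_at_top[of "1::nat"]
    proof eventually_elim
      case (elim h)
      have A: "p * int h \<ge> p" using mult_left_mono[of 1 "int h" p] elim p_pos by simp
      have B: "1 \<le> i" "k \<le> p" using ik by auto
      have le: "k \<le> i + p * int h" using A B by linarith
      have "d (i + p * int h) = d i" by (rule per_shift[where f=d and p=p, OF d_per])
      moreover have "nat (i + p * int h - k) = nat (int q * int h + (i - k))" using q by (simp add: algebra_simps)
      ultimately show ?case using cov_Gw[OF le] unfolding w_def by simp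
    qed
    have "(\<lambda>h::nat. expectation (\<lambda>\<omega>. X (i + p * int h) \<omega> * X k \<omega>)) \<sim>[at_top] (\<lambda>h. Gw (d i) (d k) w (nat (int q * int h + (i - k))))"
      by (rule asymp_equiv_refl_ev[OF ev])
    also note C(2)
    finally show ?thesis using C(1) unfolding asym_def by blast
  qed
  define R where "R i k = (SOME C. asym i k C) / \<sigma>2 i" for i k
  have R: "R i k > 0 \<and> (\<lambda>h::nat. expectation (\<lambda>\<omega>. X (i + p * int h) \<omega> * X k \<omega>)) \<sim>[at_top] (\<lambda>h. \<sigma>2 i * R i k * real h powr (d i + d k - 1))"
    if ik: "i \<in> {1..p}" "k \<in> {1..p}" for i k
  proof -
    have a: "asym i k (SOME C. asym i k C)" using someI_ex[OF ex[OF ik]] .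
    have s: "\<sigma>2 i > 0" by (rule \<sigma>_pos_all)
    have "\<sigma>2 i * R i k = (SOME C. asym i k C)" unfolding R_def using s by simp
    then show ?thesis using a s unfolding asym_def R_def by auto
  qed
  show ?thesis
  proof (intro exI[of _ R] conjI ballI allI)
    show "R i k > 0" if "i \<in> {1..p}" "k \<in> {1..p}" for i k using R[OF that] by blast
    show "integrable M (\<lambda>\<omega>. (X t \<omega>)\<^sup>2)" for t by (rule X_sq)
    show "expectation (X t) = 0" for t by (rule X_mean)
    show "expectation (\<lambda>\<omega>. X (i + p * (m + h)) \<omega> * X (k + p * m) \<omega>) = expectation (\<lambda>\<omega>. X (i + p * h) \<omega> * X k \<omega>)" for i k m h
    proof -
      have "i + p * (m + h) = (i + p * h) + p * m" by (simp add: algebra_simps)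
      then show ?thesis using stationary[of "i + p * h" m k] by (simp only:)
    qed
    show "(\<lambda>h::nat. expectation (\<lambda>\<omega>. X (i + p * int h) \<omega> * X k \<omega>)) \<sim>[at_top] (\<lambda>h. \<sigma>2 i * R i k * real h powr (d i + d k - 1))"
      if "i \<in> {1..p}" "k \<in> {1..p}" for i k using R[OF that] by blast
  qed
qed

end
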